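(* Let $\widetilde{\Sigma}=\widetilde{\Sigma}_1\uplus\cdots\uplus\widetilde{\Sigma}_n$ for pairwise disjoint visibly pushdown alphabets $\widetilde{\Sigma}_i$. If $\prec$ is a visibly pushdown contextual order on $\widetilde{\Sigma}$, then $\mathrm{red}_\prec(\widetilde{\Sigma}^* )$ is a visibly pushdown language.
   Context: A visibly pushdown (VP) alphabet is a finite alphabet partitioned into calls $\Sigma^{\mathsf{call}}$, returns $\Sigma^{\mathsf{ret}}$ and internals $\Sigma^{\mathsf{int}}$; $\widetilde{\Sigma}$ is the VP alphabet whose calls/returns/internals are the unions of those of the $\widetilde{\Sigma}_i$. A visibly pushdown automaton (VPA) $(Q,Q^{\mathsf{in}},\Gamma,\delta,Q^{\mathsf F})$ has a stack alphabet $\Gamma$ with bottom symbol $\bot$; on a call it moves to a new state and pushes a symbol of $\Gamma\setminus\{\bot\}$, on a return it pops the top symbol (reading $\bot$ when the stack is empty, which is not removed), on an internal it leaves the stack unchanged; it accepts when it ends in a state of $Q^{\mathsf F}$. A visibly pushdown language is one accepted by a VPA. The VPA is deterministic if it has one initial state and at most one transition per state/letter (and top-of-stack symbol for returns), and complete if it has at least one. Let $\mathbb{I}=\{(a,b):a\in\widetilde{\Sigma}_i,b\in\widetilde{\Sigma}_j,i\ne j\}$ and $\equiv_{\mathbb{I}}$ the least reflexive transitive relation on $\widetilde{\Sigma}^*$ with $uabv\equiv_{\mathbb{I}}ubav$ for $(a,b)\in\mathbb{I}$. A contextual order is a map $\prec$ from $\widetilde{\Sigma}^*$ to strict total orders on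 $\widetilde{\Sigma}$, $x\mapsto\prec_x$; it induces $\preceq$ on $\widetilde{\Sigma}^*$: $\sigma\preceq\rho$ iff $\sigma$ is a prefix of $\rho$ or $\sigma=\alpha a\beta$, $\rho=\alpha b\gamma$ with $a\prec_\alpha b$. For a language $L$, $\mathrm{red}_\prec(L)=\{w\in L:\forall u\in L,\ (u\equiv_{\mathbb{I}}w\wedge u\preceq w)\Rightarrow u=w\}$. A contextual order $\prec$ is visibly pushdown if there is a complete deterministic VPA $A$ over $\widetilde{\Sigma}$ and a map $\mathsf{ord}$ from states of $A$ to strict total orders on $\widetilde{\Sigma}$ such that for every $w\in\widetilde{\Sigma}^*$, $\prec_w=\mathsf{ord}(q)$ where $q$ is the state reached by $A$ after reading $w$. *)

theory Defs
  imports Main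
begin

type_synonym 'a vpalph = "'a set \<times> 'a set \<times> 'a set"

definition calls :: "'a vpalph \<Rightarrow> 'a set" where "calls S = fst S"
definition rets :: "'a vpalph \<Rightarrow> 'a set" where "rets S = fst (snd S)"
definition ints :: "'a vpalph \<Rightarrow> 'a set" where "ints S = snd (snd S)"
definition letters :: "'a vpalph \<Rightarrow> 'a set" where
  "letters S = calls S \<union> rets S \<union> ints S"

definition vp_alphabet :: "'a vpalph \<Rightarrow> bool" where
  "vp_alphabet S \<longleftrightarrow> finite (letters S) \<and>
     calls S \<inter> rets S = {} \<and> calls S \<inter> ints S = {} \<and> rets S \<inter> ints S = {}"

definition union_alph :: "nat \<Rightarrow> (nat \<Rightarrow> 'a vpalph) \<Rightarrow> 'a vpalph" where
  "union_alph n Sig = ((\<Union>i<n. calls (Sig i)), (\<Union>i<n. rets (Sig i)), (\<Union>i<n. ints (Sig i)))"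

definition disjoint_vp_alphabets :: "nat \<Rightarrow> (nat \<Rightarrow> 'a vpalph) \<Rightarrow> bool" where
  "disjoint_vp_alphabets n Sig \<longleftrightarrow> (\<forall>i<n. vp_alphabet (Sig i)) \<and>
     (\<forall>i<n. \<forall>j<n. i \<noteq> j \<longrightarrow> letters (Sig i) \<inter> letters (Sig j) = {})"

record ('s, 'g, 'a) vpa =
  states :: "'s set"
  init :: "'s set"
  stk :: "'g set"
  bot :: 'g
  dcall :: "('s \<times> 'a \<times> 's \<times> 'g) set"
  dret :: "('s \<times> 'a \<times> 'g \<times> 's) set"
  dint :: "('s \<times> 'a \<times> 's) set"
  final :: "'s set"

definition wf_vpa :: "'a vpalph \<Rightarrow> ('s, 'g, 'a) vpa \<Rightarrow> bool" where
  "wf_vpa S A \<longleftrightarrow> finite (states A) \<and> finite (stk A) \<and> bot A \<in> stk A \<and>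
     init A \<subseteq> states A \<and> final A \<subseteq> states A \<and>
     dcall A \<subseteq> states A \<times> calls S \<times> states A \<times> (stk A - {bot A}) \<and>
     dret A \<subseteq> states A \<times> rets S \<times> stk A \<times> states A \<and>
     dint A \<subseteq> states A \<times> ints S \<times> states A"

text \<open>Configurations: a state and the stack content above the bottom symbol
  (head = top); the empty list means that only the bottom symbol is present.\<close>
inductive vpa_step :: "'a vpalph \<Rightarrow> ('s, 'g, 'a) vpa \<Rightarrow> 's \<times> 'g list \<Rightarrow> 'a \<Rightarrow> 's \<times> 'g list \<Rightarrow> bool"
  for S A where
  call: "a \<in> calls S \<Longrightarrow> (q, a, q', g) \<in> dcall A \<Longrightarrow> vpa_step S A (q, s) a (q', g # s)"
| ret: "a \<in> rets S \<Longrightarrow> (q, a, g, q') \<in> dret A \<Longrightarrow> vpa_step S A (q, g # s) a (q', s)"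
| ret_bot: "a \<in> rets S \<Longrightarrow> (q, a, bot A, q') \<in> dret A \<Longrightarrow> vpa_step S A (q, []) a (q', [])"
| int: "a \<in> ints S \<Longrightarrow> (q, a, q') \<in> dint A \<Longrightarrow> vpa_step S A (q, s) a (q', s)"

inductive vpa_reach :: "'a vpalph \<Rightarrow> ('s, 'g, 'a) vpa \<Rightarrow> 's \<times> 'g list \<Rightarrow> 'a list \<Rightarrow> 's \<times> 'g list \<Rightarrow> bool"
  for S A where
  nil: "vpa_reach S A c [] c"
| cons: "vpa_step S A c a c' \<Longrightarrow> vpa_reach S A c' w c'' \<Longrightarrow> vpa_reach S A c (a # w) c''"

definition vpa_lang :: "'a vpalph \<Rightarrow> ('s, 'g, 'a) vpa \<Rightarrow> 'a list set" where
  "vpa_lang S A = {w \<in> lists (letters S). \<exists>q0\<in>init A. \<exists>q s. vpa_reach S A (q0, []) w (q, s) \<and> q \<in> final A}"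

definition deterministic_vpa :: "'a vpalph \<Rightarrow> ('s, 'g, 'a) vpa \<Rightarrow> bool" where
  "deterministic_vpa S A \<longleftrightarrow> (\<exists>q0. init A = {q0}) \<and>
     (\<forall>q a q1 g1 q2 g2. (q, a, q1, g1) \<in> dcall A \<and> (q, a, q2, g2) \<in> dcall A \<longrightarrow> q1 = q2 \<and> g1 = g2) \<and>
     (\<forall>q a g q1 q2. (q, a, g, q1) \<in> dret A \<and> (q, a, g, q2) \<in> dret A \<longrightarrow> q1 = q2) \<and>
     (\<forall>q a q1 q2. (q, a, q1) \<in> dint A \<and> (q, a, q2) \<in> dint A \<longrightarrow> q1 = q2)"

definition complete_vpa :: "'a vpalph \<Rightarrow> ('s, 'g, 'a) vpa \<Rightarrow> bool" where
  "complete_vpa S A \<longleftrightarrow> init A \<noteq> {} \<and>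
     (\<forall>q\<in>states A. \<forall>a\<in>calls S. \<exists>q' g. (q, a, q', g) \<in> dcall A) \<and>
     (\<forall>q\<in>states A. \<forall>a\<in>rets S. \<forall>g\<in>stk A. \<exists>q'. (q, a, g, q') \<in> dret A) \<and>
     (\<forall>q\<in>states A. \<forall>a\<in>ints S. \<exists>q'. (q, a, q') \<in> dint A)"

text \<open>A VP language: accepted by some VPA (states and stack symbols are taken
  w.l.o.g. to be natural numbers, any finite sets can be renamed into nat).\<close>
definition vp_language :: "'a vpalph \<Rightarrow> 'a list set \<Rightarrow> bool" where
  "vp_language S L \<longleftrightarrow> (\<exists>A :: (nat, nat, 'a) vpa. wf_vpa S A \<and> vpa_lang S A = L)"

definition strict_total_on :: "'a set \<Rightarrow> ('a \<times> 'a) set \<Rightarrow> bool" where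
  "strict_total_on X r \<longleftrightarrow> r \<subseteq> X \<times> X \<and> (\<forall>x. (x, x) \<notin> r) \<and> trans r \<and> total_on X r"

definition contextual_order :: "'a set \<Rightarrow> ('a list \<Rightarrow> ('a \<times> 'a) set) \<Rightarrow> bool" where
  "contextual_order X prec \<longleftrightarrow> (\<forall>x\<in>lists X. strict_total_on X (prec x))"

definition ctx_le :: "('a list \<Rightarrow> ('a \<times> 'a) set) \<Rightarrow> 'a list \<Rightarrow> 'a list \<Rightarrow> bool" where
  "ctx_le prec \<sigma> \<rho> \<longleftrightarrow> (\<exists>\<tau>. \<rho> = \<sigma> @ \<tau>) \<or>
     (\<exists>\<alpha> a \<beta> b \<gamma>. \<sigma> = \<alpha> @ a # \<beta> \<and> \<rho> = \<alpha> @ b # \<gamma> \<and> (a, b) \<in> prec \<alpha>)"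

definition indep :: "nat \<Rightarrow> (nat \<Rightarrow> 'a vpalph) \<Rightarrow> 'a \<Rightarrow> 'a \<Rightarrow> bool" where
  "indep n Sig a b \<longleftrightarrow> (\<exists>i<n. \<exists>j<n. i \<noteq> j \<and> a \<in> letters (Sig i) \<and> b \<in> letters (Sig j))"

inductive swap_step :: "nat \<Rightarrow> (nat \<Rightarrow> 'a vpalph) \<Rightarrow> 'a list \<Rightarrow> 'a list \<Rightarrow> bool"
  for n Sig where
  "indep n Sig a b \<Longrightarrow> swap_step n Sig (u @ a # b # v) (u @ b # a # v)"

definition trace_equiv :: "nat \<Rightarrow> (nat \<Rightarrow> 'a vpalph) \<Rightarrow> 'a list \<Rightarrow> 'a list \<Rightarrow> bool" where
  "trace_equiv n Sig = (swap_step n Sig)\<^sup>*\<^sup>*"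

definition red :: "nat \<Rightarrow> (nat \<Rightarrow> 'a vpalph) \<Rightarrow> ('a list \<Rightarrow> ('a \<times> 'a) set) \<Rightarrow> 'a list set \<Rightarrow> 'a list set" where
  "red n Sig prec L = {w \<in> L. \<forall>u\<in>L. trace_equiv n Sig u w \<and> ctx_le prec u w \<longrightarrow> u = w}"

definition vp_contextual_order :: "'a vpalph \<Rightarrow> ('a list \<Rightarrow> ('a \<times> 'a) set) \<Rightarrow> bool" where
  "vp_contextual_order S prec \<longleftrightarrow>
     (\<exists>(A :: (nat, nat, 'a) vpa) ord. wf_vpa S A \<and> deterministic_vpa S A \<and> complete_vpa S A \<and>
        (\<forall>q\<in>states A. strict_total_on (letters S) (ord q)) \<and>
        (\<forall>w\<in>lists (letters S). \<forall>q0\<in>init A. \<forall>q s.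
            vpa_reach S A (q0, []) w (q, s) \<longrightarrow> prec w = ord q))"

end

theory Submission
  imports Defs
begin


lemma reach_Nil_iff: "vpa_reach S A c [] c' \<longleftrightarrow> c' = c"
  by (auto elim: vpa_reach.cases intro: vpa_reach.intros)

lemma reach_Cons_iff: "vpa_reach S A c (a # w) c'' \<longleftrightarrow> (\<exists>c'. vpa_step S A c a c' \<and> vpa_reach S A c' w c'')"
proof
  assume "vpa_reach S A c (a # w) c''"
  then show "\<exists>c'. vpa_step S A c a c' \<and> vpa_reach S A c' w c''"
    by (cases rule: vpa_reach.cases) blast+
qed (blast intro: vpa_reach.intros)

lemma reach_append: "vpa_reach S A c (u @ v) c'' \<longleftrightarrow> (\<exists>c'. vpa_reach S A c u c' \<and> vpa_reach S A c' v c'')"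
  by (induction u arbitrary: c) (auto simp: reach_Nil_iff reach_Cons_iff)

lemma reach_snoc: "vpa_reach S A c (w @ [a]) c'' \<longleftrightarrow> (\<exists>c'. vpa_reach S A c w c' \<and> vpa_step S A c' a c'')"
  unfolding reach_append reach_Nil_iff reach_Cons_iff by blast

definition rename :: "('s \<Rightarrow> nat) \<Rightarrow> ('s, 'g, 'a) vpa \<Rightarrow> (nat, 'g, 'a) vpa" where
  "rename f B = \<lparr>states = f ` states B, init = f ` init B, stk = stk B, bot = bot B,
     dcall = (\<lambda>(p, a, q, g). (f p, a, f q, g)) ` dcall B,
     dret = (\<lambda>(p, a, g, q). (f p, a, g, f q)) ` dret B,
     dint = (\<lambda>(p, a, q). (f p, a, f q)) ` dint B,
     final = f ` final B\<rparr>"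

lemma rename_step1: "vpa_step S B (p, s) a (q, s') \<Longrightarrow> vpa_step S (rename f B) (f p, s) a (f q, s')"
proof (erule vpa_step.cases)
  fix q0 a0 q' g s0 assume h: "(p, s) = (q0, s0)" "a = a0" "(q, s') = (q', g # s0)" "a0 \<in> calls S" "(q0, a0, q', g) \<in> dcall B"
  have "(f q0, a0, f q', g) \<in> dcall (rename f B)" using h(5) unfolding rename_def by force
  then show ?thesis using h by (auto intro: vpa_step.intros)
next
  fix q0 a0 q' g s0 assume h: "(p, s) = (q0, g # s0)" "a = a0" "(q, s') = (q', s0)" "a0 \<in> rets S" "(q0, a0, g, q') \<in> dret B"
  have "(f q0, a0, g, f q') \<in> dret (rename f B)" using h(5) unfolding rename_def by force
  then show ?thesis using h by (auto intro: vpa_step.intros)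
next
  fix q0 a0 q' assume h: "(p, s) = (q0, [])" "a = a0" "(q, s') = (q', [])" "a0 \<in> rets S" "(q0, a0, bot B, q') \<in> dret B"
  have "(f q0, a0, bot (rename f B), f q') \<in> dret (rename f B)" using h(5) unfolding rename_def by force
  then show ?thesis using h by (auto intro: vpa_step.intros)
next
  fix q0 a0 q' s0 assume h: "(p, s) = (q0, s0)" "a = a0" "(q, s') = (q', s0)" "a0 \<in> ints S" "(q0, a0, q') \<in> dint B"
  have "(f q0, a0, f q') \<in> dint (rename f B)" using h(5) unfolding rename_def by force
  then show ?thesis using h by (auto intro: vpa_step.intros)
qed

lemma rename_reach1: "vpa_reach S B c w c' \<Longrightarrow> vpa_reach S (rename f B) (f (fst c), snd c) w (f (fst c'), snd c')"
proof (induction rule: vpa_reach.induct)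
  case (nil c) then show ?case by (auto intro: vpa_reach.intros)
next
  case (cons c a c' w c'')
  then show ?case using rename_step1[of S B "fst c" "snd c" a "fst c'" "snd c'" f]
    by (auto intro: vpa_reach.intros)
qed

lemma rename_step2:
  assumes wf: "wf_vpa S B" and inj: "inj_on f (states B)"
    and st: "vpa_step S (rename f B) (x, s) a (y, s')" and x: "x = f p" and p: "p \<in> states B"
  shows "\<exists>q. y = f q \<and> q \<in> states B \<and> vpa_step S B (p, s) a (q, s')"
  using st
proof (cases rule: vpa_step.cases)
  case (call g)
  then obtain p1 q1 where t: "(p1, a, q1, g) \<in> dcall B" "f p1 = f p" "y = f q1"
    using x by (auto simp: rename_def)
  moreover have "p1 \<in> states B" "q1 \<in> states B" using t wf by (auto simp: wf_vpa_def)
  ultimately have "p1 = p" using inj p by (auto dest: inj_onD)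
  then show ?thesis using t call \<open>q1 \<in> states B\<close> by (auto intro: vpa_step.intros)
next
  case (ret g)
  then obtain p1 q1 where t: "(p1, a, g, q1) \<in> dret B" "f p1 = f p" "y = f q1"
    using x by (auto simp: rename_def)
  moreover have "p1 \<in> states B" "q1 \<in> states B" using t wf by (auto simp: wf_vpa_def)
  ultimately have "p1 = p" using inj p by (auto dest: inj_onD)
  then show ?thesis using t ret \<open>q1 \<in> states B\<close> by (auto intro: vpa_step.intros)
next
  case ret_bot
  then obtain p1 q1 where t: "(p1, a, bot B, q1) \<in> dret B" "f p1 = f p" "y = f q1"
    using x by (auto simp: rename_def)
  moreover have "p1 \<in> states B" "q1 \<in> states B" using t wf by (auto simp: wf_vpa_def)
  ultimately have "p1 = p" using inj p by (auto dest: inj_onD)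
  then show ?thesis using t ret_bot \<open>q1 \<in> states B\<close> by (auto intro: vpa_step.intros)
next
  case int
  then obtain p1 q1 where t: "(p1, a, q1) \<in> dint B" "f p1 = f p" "y = f q1"
    using x by (auto simp: rename_def)
  moreover have "p1 \<in> states B" "q1 \<in> states B" using t wf by (auto simp: wf_vpa_def)
  ultimately have "p1 = p" using inj p by (auto dest: inj_onD)
  then show ?thesis using t int \<open>q1 \<in> states B\<close> by (auto intro: vpa_step.intros)
qed

lemma rename_reach2:
  assumes wf: "wf_vpa S B" and inj: "inj_on f (states B)"
  shows "vpa_reach S (rename f B) c w c' \<Longrightarrow> fst c = f p \<Longrightarrow> p \<in> states B \<Longrightarrow>
    \<exists>q. fst c' = f q \<and> q \<in> states B \<and> vpa_reach S B (p, snd c) w (q, snd c')"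
proof (induction arbitrary: p rule: vpa_reach.induct)
  case (nil c) then show ?case by (auto intro: vpa_reach.intros)
next
  case (cons c a c' w c'')
  obtain q where q: "fst c' = f q" "q \<in> states B" "vpa_step S B (p, snd c) a (q, snd c')"
    using rename_step2[OF wf inj, of "fst c" "snd c" a "fst c'" "snd c'" p] cons.hyps(1) cons.prems
    by (metis prod.collapse)
  then show ?case using cons.IH[OF q(1,2)] by (auto intro: vpa_reach.intros)
qed

lemma rename_lang:
  assumes wf: "wf_vpa S B" and inj: "inj_on f (states B)"
  shows "vpa_lang S (rename f B) = vpa_lang S B"
proof
  show "vpa_lang S (rename f B) \<subseteq> vpa_lang S B"
  proof
    fix w assume "w \<in> vpa_lang S (rename f B)"
    then obtain p0 q s where w: "w \<in> lists (letters S)" "p0 \<in> init B"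
      "vpa_reach S (rename f B) (f p0, []) w (q, s)" "q \<in> f ` final B"
      by (auto simp: vpa_lang_def rename_def)
    have p0: "p0 \<in> states B" using w(2) wf by (auto simp: wf_vpa_def)
    obtain q' where q': "q = f q'" "q' \<in> states B" "vpa_reach S B (p0, []) w (q', s)"
      using rename_reach2[OF wf inj w(3) _ p0] by auto
    have "q' \<in> final B" using w(4) q' inj wf by (auto simp: wf_vpa_def inj_on_image_mem_iff)
    then show "w \<in> vpa_lang S B" using w q' by (auto simp: vpa_lang_def)
  qed
next
  show "vpa_lang S B \<subseteq> vpa_lang S (rename f B)"
  proof
    fix w assume "w \<in> vpa_lang S B"
    then obtain p0 q s where w: "w \<in> lists (letters S)" "p0 \<in> init B"
      "vpa_reach S B (p0, []) w (q, s)" "q \<in> final B"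
      by (auto simp: vpa_lang_def)
    show "w \<in> vpa_lang S (rename f B)"
      using rename_reach1[OF w(3), of f] w by (auto simp: vpa_lang_def rename_def)
  qed
qed

lemma rename_wf:
  assumes wf: "wf_vpa S B"
  shows "wf_vpa S (rename f B)"
  using wf unfolding wf_vpa_def rename_def by fastforce



locale redctx =
  fixes n :: nat and Sig :: "nat \<Rightarrow> 'a vpalph" and prec :: "'a list \<Rightarrow> ('a \<times> 'a) set"
    and A :: "(nat, nat, 'a) vpa" and ord :: "nat \<Rightarrow> ('a \<times> 'a) set" and q0 :: nat
  assumes disj: "disjoint_vp_alphabets n Sig"
    and wfA: "wf_vpa (union_alph n Sig) A"
    and compA: "complete_vpa (union_alph n Sig) A"
    and ordtot: "\<forall>q\<in>states A. strict_total_on (letters (union_alph n Sig)) (ord q)"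
    and precA: "\<forall>w\<in>lists (letters (union_alph n Sig)). \<forall>q0\<in>init A. \<forall>q s.
            vpa_reach (union_alph n Sig) A (q0, []) w (q, s) \<longrightarrow> prec w = ord q"
    and ctx: "contextual_order (letters (union_alph n Sig)) prec"
    and initA: "init A = {q0}"
begin

abbreviation "SS \<equiv> union_alph n Sig"
abbreviation "XX \<equiv> letters (union_alph n Sig)"

lemma X_eq: "XX = (\<Union>i<n. letters (Sig i))"
  by (auto simp: letters_def union_alph_def calls_def rets_def ints_def)

lemma finX: "finite XX"
  using disj unfolding X_eq disjoint_vp_alphabets_def vp_alphabet_def by auto

lemma comp_unique: "i < n \<Longrightarrow> j < n \<Longrightarrow> a \<in> letters (Sig i) \<Longrightarrow> a \<in> letters (Sig j) \<Longrightarrow> i = j"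
  using disj unfolding disjoint_vp_alphabets_def by blast

lemma indep_X: "indep n Sig a c \<Longrightarrow> a \<in> XX \<and> c \<in> XX"
  by (auto simp: indep_def X_eq)

lemma indep_irrefl: "\<not> indep n Sig a a"
  using comp_unique by (auto simp: indep_def)

lemma indep_I: "a \<in> letters (Sig k) \<Longrightarrow> k < n \<Longrightarrow> c \<in> XX \<Longrightarrow> c \<notin> letters (Sig k) \<Longrightarrow> indep n Sig a c"
  unfolding indep_def X_eq by blast

definition Tset :: "'a list \<Rightarrow> 'a set" where
  "Tset w = {a. \<exists>\<alpha> b u. w = \<alpha> @ b # u \<and> (a, b) \<in> prec \<alpha> \<and> (\<forall>c\<in>set (b # u). indep n Sig a c)}"

definition okw :: "'a list \<Rightarrow> bool" where
  "okw w \<longleftrightarrow> (\<forall>v a \<beta>. w = v @ a # \<beta> \<longrightarrow> a \<notin> Tset v)"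

lemma Tset_Nil: "Tset [] = {}" by (simp add: Tset_def)

lemma Tset_snoc: "Tset (w @ [c]) = {a\<in>Tset w. indep n Sig a c} \<union> {a. (a, c) \<in> prec w \<and> indep n Sig a c}"
proof
  show "Tset (w @ [c]) \<subseteq> {a\<in>Tset w. indep n Sig a c} \<union> {a. (a, c) \<in> prec w \<and> indep n Sig a c}"
  proof
    fix a assume "a \<in> Tset (w @ [c])"
    then obtain \<alpha> b u where h: "w @ [c] = \<alpha> @ b # u" "(a, b) \<in> prec \<alpha>" "\<forall>c\<in>set (b # u). indep n Sig a c"
      unfolding Tset_def by blast
    show "a \<in> {a\<in>Tset w. indep n Sig a c} \<union> {a. (a, c) \<in> prec w \<and> indep n Sig a c}"
    proof (cases u rule: rev_exhaust)
      case Nil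
      then have "w = \<alpha>" "b = c" using h(1) by auto
      then show ?thesis using h by auto
    next
      case (snoc u' d)
      then have "w = \<alpha> @ b # u'" "d = c" using h(1) by auto
      then show ?thesis using h snoc unfolding Tset_def by auto
    qed
  qed
next
  show "{a\<in>Tset w. indep n Sig a c} \<union> {a. (a, c) \<in> prec w \<and> indep n Sig a c} \<subseteq> Tset (w @ [c])"
  proof
    fix a assume "a \<in> {a\<in>Tset w. indep n Sig a c} \<union> {a. (a, c) \<in> prec w \<and> indep n Sig a c}"
    then consider "a \<in> Tset w" "indep n Sig a c" | "(a, c) \<in> prec w" "indep n Sig a c" by blast
    then show "a \<in> Tset (w @ [c])"
    proof cases
      case 1
      then obtain \<alpha> b u where h: "w = \<alpha> @ b # u" "(a, b) \<in> prec \<alpha>" "\<forall>c\<in>set (b # u). indep n Sig a c"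
        unfolding Tset_def by blast
      then have "w @ [c] = \<alpha> @ b # (u @ [c])" by simp
      then show ?thesis unfolding Tset_def using h 1 by fastforce
    next
      case 2
      have "w @ [c] = w @ c # []" by simp
      then show ?thesis unfolding Tset_def using 2 by fastforce
    qed
  qed
qed

lemma okw_Nil: "okw []" by (simp add: okw_def)

lemma okw_snoc: "okw (w @ [c]) \<longleftrightarrow> okw w \<and> c \<notin> Tset w"
proof
  assume h: "okw (w @ [c])"
  have "okw w" unfolding okw_def
  proof (intro allI impI)
    fix v a \<beta> assume "w = v @ a # \<beta>"
    then have "w @ [c] = v @ a # (\<beta> @ [c])" by simp
    then show "a \<notin> Tset v" using h unfolding okw_def by blast
  qed
  moreover have "c \<notin> Tset w" using h unfolding okw_def by auto
  ultimately show "okw w \<and> c \<notin> Tset w" by blast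
next
  assume h: "okw w \<and> c \<notin> Tset w"
  show "okw (w @ [c])" unfolding okw_def
  proof (intro allI impI)
    fix v a \<beta> assume e: "w @ [c] = v @ a # \<beta>"
    show "a \<notin> Tset v"
    proof (cases \<beta> rule: rev_exhaust)
      case Nil
      then show ?thesis using e h by auto
    next
      case (snoc \<beta>' d)
      then have "w = v @ a # \<beta>'" using e by auto
      then show ?thesis using h unfolding okw_def by blast
    qed
  qed
qed

lemma Tset_sub: "Tset w \<subseteq> XX"
  unfolding Tset_def using indep_X by fastforce

lemma trace_len: "trace_equiv n Sig u w \<Longrightarrow> length u = length w"
  unfolding trace_equiv_def
  by (induction rule: rtranclp_induct) (auto elim: swap_step.cases)

lemma trace_filter:
  assumes k: "k < n"
  shows "trace_equiv n Sig u w \<Longrightarrow> filter (\<lambda>c. c \<in> letters (Sig k)) u = filter (\<lambda>c. c \<in> letters (Sig k)) w"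
  unfolding trace_equiv_def
proof (induction rule: rtranclp_induct)
  case base then show ?case by simp
next
  case (step y z)
  from step.hyps(2) show ?case
  proof (cases rule: swap_step.cases)
    case (1 a b u v)
    have "\<not> (a \<in> letters (Sig k) \<and> b \<in> letters (Sig k))"
      using 1(3) comp_unique k unfolding indep_def by metis
    then show ?thesis using step.IH 1 by auto
  qed
qed

lemma move: "\<forall>c\<in>set v. indep n Sig a c \<Longrightarrow> trace_equiv n Sig (x @ a # v @ y) (x @ v @ a # y)"
proof (induction v arbitrary: x)
  case Nil then show ?case by (simp add: trace_equiv_def)
next
  case (Cons c v)
  have "swap_step n Sig (x @ a # c # (v @ y)) (x @ c # a # (v @ y))"
    using Cons.prems by (auto intro: swap_step.intros)
  moreover have "trace_equiv n Sig ((x @ [c]) @ a # v @ y) ((x @ [c]) @ v @ a # y)"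
    using Cons.IH[of "x @ [c]"] Cons.prems by simp
  ultimately show ?case unfolding trace_equiv_def
    by (simp add: converse_rtranclp_into_rtranclp)
qed

lemma prec_irrefl: "\<alpha> \<in> lists XX \<Longrightarrow> (a, a) \<notin> prec \<alpha>"
  using ctx unfolding contextual_order_def strict_total_on_def by blast

lemma prec_sub: "\<alpha> \<in> lists XX \<Longrightarrow> prec \<alpha> \<subseteq> XX \<times> XX"
  using ctx unfolding contextual_order_def strict_total_on_def by blast

lemma red_iff:
  assumes w: "w \<in> lists XX"
  shows "w \<in> red n Sig prec (lists XX) \<longleftrightarrow> okw w"
proof
  assume r: "w \<in> red n Sig prec (lists XX)"
  show "okw w" unfolding okw_def
  proof (intro allI impI notI)
    fix v a \<beta> assume e: "w = v @ a # \<beta>" and t: "a \<in> Tset v"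
    then obtain \<alpha> b u where h: "v = \<alpha> @ b # u" "(a, b) \<in> prec \<alpha>" "\<forall>c\<in>set (b # u). indep n Sig a c"
      unfolding Tset_def by blast
    define u0 where "u0 = \<alpha> @ a # (b # u) @ \<beta>"
    have "trace_equiv n Sig u0 w" unfolding u0_def e h(1)
      using move[OF h(3), of \<alpha> \<beta>] by simp
    moreover have "ctx_le prec u0 w" unfolding ctx_le_def u0_def e h(1)
      using h(2) by fastforce
    moreover have "u0 \<in> lists XX" using w indep_X h(3) unfolding u0_def e h(1) by auto
    ultimately have "u0 = w" using r unfolding red_def by blast
    then have "a = b" unfolding u0_def e h(1) by simp
    then show False using h(3) indep_irrefl by auto
  qed
next
  assume ok: "okw w"
  show "w \<in> red n Sig prec (lists XX)" unfolding red_def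
  proof (intro CollectI conjI ballI impI w)
    fix u assume u: "u \<in> lists XX" and h: "trace_equiv n Sig u w \<and> ctx_le prec u w"
    have len: "length u = length w" using h trace_len by blast
    from h consider \<tau> where "w = u @ \<tau>"
      | \<alpha> a \<beta> b \<gamma> where "u = \<alpha> @ a # \<beta>" "w = \<alpha> @ b # \<gamma>" "(a, b) \<in> prec \<alpha>"
      unfolding ctx_le_def by blast
    then show "u = w"
    proof cases
      case 1 then show ?thesis using len by simp
    next
      case 2
      have \<alpha>: "\<alpha> \<in> lists XX" using w 2 by auto
      have "a \<in> XX" using prec_sub[OF \<alpha>] 2 by auto
      then obtain k where k: "k < n" "a \<in> letters (Sig k)" unfolding X_eq by blast
      let ?P = "\<lambda>c. c \<in> letters (Sig k)"
      have "filter ?P u = filter ?P w" using trace_filter[OF k(1)] h by blast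
      then have "filter ?P (b # \<gamma>) = a # filter ?P \<beta>" using 2 k by simp
      then obtain us vs where d: "b # \<gamma> = us @ a # vs" "\<forall>c\<in>set us. \<not> ?P c"
        using filter_eq_ConsD by metis
      show ?thesis
      proof (cases us)
        case Nil
        then have "a = b" using d by simp
        then show ?thesis using 2 prec_irrefl[OF \<alpha>] by simp
      next
        case (Cons b' u')
        then have bu: "b' = b" "\<gamma> = u' @ a # vs" using d by auto
        have ind: "\<forall>c\<in>set (b # u'). indep n Sig a c"
        proof
          fix c assume c: "c \<in> set (b # u')"
          then have "c \<in> XX" using w 2 bu by auto
          moreover have "\<not> ?P c" using d(2) c Cons bu by auto
          ultimately show "indep n Sig a c" using indep_I k by blast
        qed
        have "a \<in> Tset (\<alpha> @ b # u')" unfolding Tset_def using 2 ind by blast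
        moreover have "w = (\<alpha> @ b # u') @ a # vs" using 2 bu by simp
        ultimately show ?thesis using ok unfolding okw_def by blast
      qed
    qed
  qed
qed

end


context redctx
begin

definition upd :: "('a \<times> 'a) set \<Rightarrow> 'a set \<Rightarrow> 'a \<Rightarrow> 'a set" where
  "upd r T c = {a\<in>T. indep n Sig a c} \<union> {a. (a, c) \<in> r \<and> indep n Sig a c}"

definition B :: "(nat \<times> 'a set, nat, 'a) vpa" where
  "B = \<lparr>states = states A \<times> Pow XX, init = {(q0, {})}, stk = stk A, bot = bot A,
     dcall = {((q, T), c, (q', upd (ord q) T c), g) | q T c q' g. (q, c, q', g) \<in> dcall A \<and> T \<subseteq> XX \<and> c \<notin> T},
     dret = {((q, T), c, g, (q', upd (ord q) T c)) | q T c g q'. (q, c, g, q') \<in> dret A \<and> T \<subseteq> XX \<and> c \<notin> T},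
     dint = {((q, T), c, (q', upd (ord q) T c)) | q T c q'. (q, c, q') \<in> dint A \<and> T \<subseteq> XX \<and> c \<notin> T},
     final = states A \<times> Pow XX\<rparr>"

lemma upd_sub: "upd r T c \<subseteq> XX"
  unfolding upd_def using indep_X by blast

lemma q0A: "q0 \<in> states A"
  using wfA initA unfolding wf_vpa_def by auto

lemma wfB: "wf_vpa SS B"
  using wfA finX upd_sub q0A unfolding wf_vpa_def B_def by auto

lemma finB: "finite (states B)"
  using wfA finX unfolding wf_vpa_def B_def by auto

lemma stepB:
  "vpa_step SS B ((q, T), s) c ((q', T'), s') \<longleftrightarrow>
    vpa_step SS A (q, s) c (q', s') \<and> T \<subseteq> XX \<and> c \<notin> T \<and> T' = upd (ord q) T c"
proof
  assume "vpa_step SS B ((q, T), s) c ((q', T'), s')"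
  then show "vpa_step SS A (q, s) c (q', s') \<and> T \<subseteq> XX \<and> c \<notin> T \<and> T' = upd (ord q) T c"
    by (cases rule: vpa_step.cases) (auto simp: B_def intro: vpa_step.intros)
next
  assume h: "vpa_step SS A (q, s) c (q', s') \<and> T \<subseteq> XX \<and> c \<notin> T \<and> T' = upd (ord q) T c"
  then have "vpa_step SS A (q, s) c (q', s')" by blast
  then show "vpa_step SS B ((q, T), s) c ((q', T'), s')"
    by (cases rule: vpa_step.cases) (use h in \<open>auto simp: B_def intro: vpa_step.intros\<close>)
qed

lemma stepA_inv: "vpa_step SS A c a c' \<Longrightarrow> fst c \<in> states A \<Longrightarrow> set (snd c) \<subseteq> stk A \<Longrightarrow>
    fst c' \<in> states A \<and> set (snd c') \<subseteq> stk A"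
  by (erule vpa_step.cases) (use wfA in \<open>auto simp: wf_vpa_def\<close>)

lemma reachA_inv: "vpa_reach SS A c w c' \<Longrightarrow> fst c \<in> states A \<Longrightarrow> set (snd c) \<subseteq> stk A \<Longrightarrow>
    fst c' \<in> states A \<and> set (snd c') \<subseteq> stk A"
  by (induction rule: vpa_reach.induct) (auto dest: stepA_inv)

lemma stepA_ex:
  assumes "p \<in> states A" "set s \<subseteq> stk A" "c \<in> XX"
  shows "\<exists>q s'. vpa_step SS A (p, s) c (q, s')"
proof -
  have c: "c \<in> calls SS \<or> c \<in> rets SS \<or> c \<in> ints SS" using assms(3) unfolding letters_def by blast
  have bot: "bot A \<in> stk A" using wfA unfolding wf_vpa_def by blast
  show ?thesis
  proof (cases "c \<in> calls SS")
    case True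
    then obtain q g where "(p, c, q, g) \<in> dcall A" using compA assms(1) unfolding complete_vpa_def by blast
    then show ?thesis using True by (blast intro: vpa_step.intros)
  next
    case F1: False
    show ?thesis
    proof (cases "c \<in> rets SS")
      case True
      show ?thesis
      proof (cases s)
        case Nil
        then obtain q where "(p, c, bot A, q) \<in> dret A" using compA assms(1) bot True unfolding complete_vpa_def by blast
        then show ?thesis using True Nil by (blast intro: vpa_step.intros)
      next
        case (Cons g s0)
        then have "g \<in> stk A" using assms(2) by auto
        then obtain q where "(p, c, g, q) \<in> dret A" using compA assms(1) True unfolding complete_vpa_def by blast
        then show ?thesis using True Cons by (blast intro: vpa_step.intros)
      qed
    next
      case False
      then have "c \<in> ints SS" using c F1 by blast
      then obtain q where "(p, c, q) \<in> dint A" using compA assms(1) unfolding complete_vpa_def by blast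
      then show ?thesis using \<open>c \<in> ints SS\<close> by (blast intro: vpa_step.intros)
    qed
  qed
qed

lemma runB: "w \<in> lists XX \<Longrightarrow>
  (\<forall>q T s. vpa_reach SS B ((q0, {}), []) w ((q, T), s) \<longrightarrow> vpa_reach SS A (q0, []) w (q, s) \<and> T = Tset w \<and> okw w) \<and>
  (okw w \<longrightarrow> (\<exists>q s. vpa_reach SS B ((q0, {}), []) w ((q, Tset w), s)))"
proof (induction w rule: rev_induct)
  case Nil
  then show ?case by (auto simp: reach_Nil_iff Tset_Nil okw_Nil)
next
  case (snoc c w)
  have w: "w \<in> lists XX" and cX: "c \<in> XX" using snoc.prems by auto
  note IH = snoc.IH[OF w]
  have P: "vpa_reach SS A (q0, []) (w @ [c]) (q, s) \<and> T = Tset (w @ [c]) \<and> okw (w @ [c])"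
    if r: "vpa_reach SS B ((q0, {}), []) (w @ [c]) ((q, T), s)" for q T s
  proof -
    obtain q1 T1 s1 where r1: "vpa_reach SS B ((q0, {}), []) w ((q1, T1), s1)"
      and st: "vpa_step SS B ((q1, T1), s1) c ((q, T), s)"
      using r unfolding reach_snoc by auto
    have a: "vpa_reach SS A (q0, []) w (q1, s1)" "T1 = Tset w" "okw w" using IH r1 by auto
    have st': "vpa_step SS A (q1, s1) c (q, s)" "c \<notin> T1" "T = upd (ord q1) T1 c"
      using st unfolding stepB by auto
    have "prec w = ord q1" using precA w a(1) initA by auto
    then have "T = Tset (w @ [c])" using st'(3) a(2) unfolding Tset_snoc upd_def by simp
    moreover have "vpa_reach SS A (q0, []) (w @ [c]) (q, s)" using a(1) st'(1) unfolding reach_snoc by blast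
    moreover have "okw (w @ [c])" using a st' okw_snoc by blast
    ultimately show ?thesis by blast
  qed
  have Q: "\<exists>q s. vpa_reach SS B ((q0, {}), []) (w @ [c]) ((q, Tset (w @ [c])), s)"
    if ok: "okw (w @ [c])"
  proof -
    have ok': "okw w" "c \<notin> Tset w" using ok okw_snoc by auto
    obtain q1 s1 where r1: "vpa_reach SS B ((q0, {}), []) w ((q1, Tset w), s1)" using IH ok' by blast
    have a: "vpa_reach SS A (q0, []) w (q1, s1)" using IH r1 by blast
    have inv: "q1 \<in> states A" "set s1 \<subseteq> stk A" using reachA_inv[OF a] q0A by auto
    obtain q s where st: "vpa_step SS A (q1, s1) c (q, s)" using stepA_ex[OF inv cX] by blast
    have "prec w = ord q1" using precA w a initA by auto
    then have "upd (ord q1) (Tset w) c = Tset (w @ [c])" unfolding Tset_snoc upd_def by simp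
    then have "vpa_step SS B ((q1, Tset w), s1) c ((q, Tset (w @ [c])), s)"
      unfolding stepB using st ok' Tset_sub by metis
    then show ?thesis using r1 unfolding reach_snoc by blast
  qed
  show ?case using P Q by blast
qed

lemma langB: "vpa_lang SS B = {w \<in> lists XX. okw w}"
proof
  show "vpa_lang SS B \<subseteq> {w \<in> lists XX. okw w}"
  proof
    fix w assume "w \<in> vpa_lang SS B"
    then obtain q T s where w: "w \<in> lists XX" "vpa_reach SS B ((q0, {}), []) w ((q, T), s)"
      unfolding vpa_lang_def B_def by auto
    then show "w \<in> {w \<in> lists XX. okw w}" using runB[OF w(1)] by blast
  qed
next
  show "{w \<in> lists XX. okw w} \<subseteq> vpa_lang SS B"
  proof
    fix w assume w: "w \<in> {w \<in> lists XX. okw w}"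
    then obtain q s where r: "vpa_reach SS B ((q0, {}), []) w ((q, Tset w), s)" using runB by blast
    then have "vpa_reach SS A (q0, []) w (q, s)" using runB w by blast
    then have "q \<in> states A" using reachA_inv q0A by fastforce
    then have "(q, Tset w) \<in> final B" using Tset_sub unfolding B_def by auto
    then show "w \<in> vpa_lang SS B" using w r unfolding vpa_lang_def by (auto simp: B_def)
  qed
qed

lemma langB_red: "vpa_lang SS B = red n Sig prec (lists XX)"
  unfolding langB using red_iff unfolding red_def by blast

end


theorem proposition3p12:
  fixes n :: nat and Sig :: "nat \<Rightarrow> 'a vpalph" and prec :: "'a list \<Rightarrow> ('a \<times> 'a) set"
  assumes "disjoint_vp_alphabets n Sig"
    and "contextual_order (letters (union_alph n Sig)) prec"
    and "vp_contextual_order (union_alph n Sig) prec"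
  shows "vp_language (union_alph n Sig) (red n Sig prec (lists (letters (union_alph n Sig))))"
proof -
  obtain A :: "(nat, nat, 'a) vpa" and ord where
    h: "wf_vpa (union_alph n Sig) A" "deterministic_vpa (union_alph n Sig) A" "complete_vpa (union_alph n Sig) A"
       "\<forall>q\<in>states A. strict_total_on (letters (union_alph n Sig)) (ord q)"
       "\<forall>w\<in>lists (letters (union_alph n Sig)). \<forall>q0\<in>init A. \<forall>q s.
            vpa_reach (union_alph n Sig) A (q0, []) w (q, s) \<longrightarrow> prec w = ord q"
    using assms(3) unfolding vp_contextual_order_def by blast
  obtain q0 where q0: "init A = {q0}" using h(2) unfolding deterministic_vpa_def by blast
  interpret R: redctx n Sig prec A ord q0
    using assms(1,2) h(1,3,4,5) q0 by unfold_locales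
  obtain f :: "nat \<times> 'a set \<Rightarrow> nat" and m where "inj_on f (states R.B)"
    using finite_imp_inj_to_nat_seg[OF R.finB] by blast
  then have "vpa_lang (union_alph n Sig) (rename f R.B) = red n Sig prec (lists (letters (union_alph n Sig)))"
    using rename_lang[OF R.wfB] R.langB_red by simp
  moreover have "wf_vpa (union_alph n Sig) (rename f R.B)" using rename_wf[OF R.wfB] .
  ultimately show ?thesis unfolding vp_language_def by blast
qed


end
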